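(* Let $d$ be a positive integer and $H$ a complex Hilbert space. Let $T=(T_1,\ldots,T_d)$ and $\tilde T=(\tilde T_1,\ldots,\tilde T_d)$ be two commuting operator-valued multishifts on $\ell^2_H(\mathbb N^d)$ with respective unitary operator weights $\{A^{(j)}_\alpha:\alpha\in\mathbb N^d,\ j=1,\ldots,d\}$ and $\{\tilde A^{(j)}_\alpha:\alpha\in\mathbb N^d,\ j=1,\ldots,d\}$. Then $T$ and $\tilde T$ are unitarily equivalent, i.e. there is a unitary $U$ on $\ell^2_H(\mathbb N^d)$ with $UT_jU^*=\tilde T_j$ for all $j=1,\ldots,d$.
   Context: $\mathbb N$ denotes the nonnegative integers; $\varepsilon_j\in\mathbb N^d$ has $1$ in the $j$-th place and $0$ elsewhere. $\ell^2_H(\mathbb N^d)=\bigoplus_{\alpha\in\mathbb N^d}H$ is the orthogonal direct sum of copies of $H$ indexed by $\mathbb N^d$. Given bounded operators $A^{(j)}_\alpha:H\to H$ ($\alpha\in\mathbb N^d$, $j=1,\ldots,d$), the operator-valued multishift with these operator weights is the $d$-tuple $T=(T_1,\ldots,T_d)$ defined by $T_j(\oplus_\alpha x_\alpha)=\oplus_\alpha A^{(j)}_{\alpha-\varepsilon_j}x_{\alpha-\varepsilon_j}$, where the term is interpreted as $0$ when $\alpha_j=0$ (with domain $\{x:\sum_\alpha\|A^{(j)}_\alpha x_\alpha\|^2<\infty\}$). It is called a commuting operator-valued multishift if $\sup_{\alpha}\|A^{(j)}_\alpha\|<\infty$ for each $j$ and $A^{(i)}_{\alpha+\varepsilon_j}A^{(j)}_\alpha=A^{(j)}_{\alpha+\varepsilon_i}A^{(i)}_\alpha$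 for all $\alpha\in\mathbb N^d$ and $i,j=1,\ldots,d$. *)

theory Defs
  imports "HOL-Analysis.Analysis"
begin

definition hnorm :: "('h \<Rightarrow> 'h \<Rightarrow> complex) \<Rightarrow> 'h \<Rightarrow> real" where
  "hnorm ip x = sqrt (Re (ip x x))"

definition complex_hilbert_space ::
  "(complex \<Rightarrow> 'h::ab_group_add \<Rightarrow> 'h) \<Rightarrow> ('h \<Rightarrow> 'h \<Rightarrow> complex) \<Rightarrow> bool" where
  "complex_hilbert_space sc ip \<longleftrightarrow>
     vector_space sc \<and>
     (\<forall>x y. ip x y = cnj (ip y x)) \<and>
     (\<forall>x y z. ip (x + y) z = ip x z + ip y z) \<and>
     (\<forall>c x y. ip (sc c x) y = c * ip x y) \<and>
     (\<forall>x. Im (ip x x) = 0 \<and> 0 \<le> Re (ip x x)) \<and>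
     (\<forall>x. ip x x = 0 \<longrightarrow> x = 0) \<and>
     (\<forall>X :: nat \<Rightarrow> 'h. (\<forall>e>0. \<exists>N. \<forall>m\<ge>N. \<forall>n\<ge>N. hnorm ip (X m - X n) < e)
          \<longrightarrow> (\<exists>L. (\<lambda>n. hnorm ip (X n - L)) \<longlonglongrightarrow> 0))"

definition bounded_op ::
  "(complex \<Rightarrow> 'h::ab_group_add \<Rightarrow> 'h) \<Rightarrow> ('h \<Rightarrow> 'h \<Rightarrow> complex) \<Rightarrow> ('h \<Rightarrow> 'h) \<Rightarrow> bool" where
  "bounded_op sc ip T \<longleftrightarrow> Vector_Spaces.linear sc sc T \<and>
     (\<exists>K. \<forall>x. hnorm ip (T x) \<le> K * hnorm ip x)"

definition unitary_op ::
  "(complex \<Rightarrow> 'h::ab_group_add \<Rightarrow> 'h) \<Rightarrow> ('h \<Rightarrow> 'h \<Rightarrow> complex) \<Rightarrow> ('h \<Rightarrow> 'h) \<Rightarrow> bool" where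
  "unitary_op sc ip U \<longleftrightarrow> bounded_op sc ip U \<and>
     (\<exists>V. bounded_op sc ip V \<and> (\<forall>x y. ip (U x) y = ip x (V y)) \<and>
          U \<circ> V = id \<and> V \<circ> U = id)"

text \<open>Multi-indices in N^d are functions 'd \<Rightarrow> nat for a finite type 'd with CARD('d) = d.\<close>

definition eps :: "'d \<Rightarrow> 'd \<Rightarrow> nat" where
  "eps j = (\<lambda>i. if i = j then 1 else 0)"

definition idx_add :: "('d \<Rightarrow> nat) \<Rightarrow> ('d \<Rightarrow> nat) \<Rightarrow> 'd \<Rightarrow> nat" where
  "idx_add \<alpha> \<beta> = (\<lambda>i. \<alpha> i + \<beta> i)"

definition idx_sub :: "('d \<Rightarrow> nat) \<Rightarrow> ('d \<Rightarrow> nat) \<Rightarrow> 'd \<Rightarrow> nat" where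
  "idx_sub \<alpha> \<beta> = (\<lambda>i. \<alpha> i - \<beta> i)"

definition l2 :: "('h \<Rightarrow> 'h \<Rightarrow> complex) \<Rightarrow> (('d \<Rightarrow> nat) \<Rightarrow> 'h) set" where
  "l2 ip = {x. (\<lambda>\<alpha>. (hnorm ip (x \<alpha>))\<^sup>2) summable_on UNIV}"

definition l2_inner :: "('h \<Rightarrow> 'h \<Rightarrow> complex) \<Rightarrow> (('d \<Rightarrow> nat) \<Rightarrow> 'h) \<Rightarrow> (('d \<Rightarrow> nat) \<Rightarrow> 'h) \<Rightarrow> complex" where
  "l2_inner ip x y = (\<Sum>\<^sub>\<infinity>\<alpha>. ip (x \<alpha>) (y \<alpha>))"

definition l2_norm :: "('h \<Rightarrow> 'h \<Rightarrow> complex) \<Rightarrow> (('d \<Rightarrow> nat) \<Rightarrow> 'h) \<Rightarrow> real" where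
  "l2_norm ip x = sqrt (Re (l2_inner ip x x))"

definition l2_scale :: "(complex \<Rightarrow> 'h \<Rightarrow> 'h) \<Rightarrow> complex \<Rightarrow> (('d \<Rightarrow> nat) \<Rightarrow> 'h) \<Rightarrow> ('d \<Rightarrow> nat) \<Rightarrow> 'h" where
  "l2_scale sc c x = (\<lambda>\<alpha>. sc c (x \<alpha>))"

definition l2_unitary ::
  "(complex \<Rightarrow> 'h::ab_group_add \<Rightarrow> 'h) \<Rightarrow> ('h \<Rightarrow> 'h \<Rightarrow> complex)
   \<Rightarrow> ((('d \<Rightarrow> nat) \<Rightarrow> 'h) \<Rightarrow> (('d \<Rightarrow> nat) \<Rightarrow> 'h))
   \<Rightarrow> ((('d \<Rightarrow> nat) \<Rightarrow> 'h) \<Rightarrow> (('d \<Rightarrow> nat) \<Rightarrow> 'h)) \<Rightarrow> bool" where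
  "l2_unitary sc ip U V \<longleftrightarrow>
     U ` l2 ip \<subseteq> l2 ip \<and> V ` l2 ip \<subseteq> l2 ip \<and>
     (\<forall>x\<in>l2 ip. \<forall>y\<in>l2 ip. U (\<lambda>\<alpha>. x \<alpha> + y \<alpha>) = (\<lambda>\<alpha>. U x \<alpha> + U y \<alpha>) \<and> V (\<lambda>\<alpha>. x \<alpha> + y \<alpha>) = (\<lambda>\<alpha>. V x \<alpha> + V y \<alpha>)) \<and>
     (\<forall>c. \<forall>x\<in>l2 ip. U (l2_scale sc c x) = l2_scale sc c (U x) \<and>
                    V (l2_scale sc c x) = l2_scale sc c (V x)) \<and>
     (\<exists>K. \<forall>x\<in>l2 ip. l2_norm ip (U x) \<le> K * l2_norm ip x) \<and>
     (\<forall>x\<in>l2 ip. \<forall>y\<in>l2 ip. l2_inner ip (U x) y = l2_inner ip x (V y)) \<and>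
     (\<forall>x\<in>l2 ip. U (V x) = x \<and> V (U x) = x)"

text \<open>Operator-valued multishift: A j \<alpha> is the weight A^{(j)}_\<alpha>.
  (T_j x)_\<alpha> = A^{(j)}_{\<alpha>-\<epsilon>_j} x_{\<alpha>-\<epsilon>_j}, and 0 if \<alpha>_j = 0.\<close>

definition multishift :: "('d \<Rightarrow> ('d \<Rightarrow> nat) \<Rightarrow> 'h \<Rightarrow> 'h::zero) \<Rightarrow> 'd
    \<Rightarrow> (('d \<Rightarrow> nat) \<Rightarrow> 'h) \<Rightarrow> ('d \<Rightarrow> nat) \<Rightarrow> 'h" where
  "multishift A j x = (\<lambda>\<alpha>. if \<alpha> j = 0 then 0
       else A j (idx_sub \<alpha> (eps j)) (x (idx_sub \<alpha> (eps j))))"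

definition commuting_op_multishift ::
  "(complex \<Rightarrow> 'h::ab_group_add \<Rightarrow> 'h) \<Rightarrow> ('h \<Rightarrow> 'h \<Rightarrow> complex)
   \<Rightarrow> ('d \<Rightarrow> ('d \<Rightarrow> nat) \<Rightarrow> 'h \<Rightarrow> 'h) \<Rightarrow> bool" where
  "commuting_op_multishift sc ip A \<longleftrightarrow>
     (\<forall>j \<alpha>. bounded_op sc ip (A j \<alpha>)) \<and>
     (\<forall>j. \<exists>K. \<forall>\<alpha> x. hnorm ip (A j \<alpha> x) \<le> K * hnorm ip x) \<and>
     (\<forall>i j \<alpha>. A i (idx_add \<alpha> (eps j)) \<circ> A j \<alpha> = A j (idx_add \<alpha> (eps i)) \<circ> A i \<alpha>)"

end

theory Submission
  imports Defs
begin

definition good :: "(complex \<Rightarrow> 'h::ab_group_add \<Rightarrow> 'h) \<Rightarrow> ('h \<Rightarrow> 'h \<Rightarrow> complex) \<Rightarrow> ('h \<Rightarrow> 'h) \<Rightarrow> ('h \<Rightarrow> 'h) \<Rightarrow> bool" where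
  "good sc ip D E \<longleftrightarrow> (\<forall>u v. D (u+v) = D u + D v) \<and> (\<forall>c u. D (sc c u) = sc c (D u))
     \<and> (\<forall>u v. E (u+v) = E u + E v) \<and> (\<forall>c u. E (sc c u) = sc c (E u))
     \<and> (\<forall>u v. ip (D u) v = ip u (E v)) \<and> (\<forall>u. D (E u) = u) \<and> (\<forall>u. E (D u) = u)"

lemma good_id: "good sc ip id id"
  unfolding good_def by simp

lemma good_comp: "good sc ip D1 E1 \<Longrightarrow> good sc ip D2 E2 \<Longrightarrow> good sc ip (D1 \<circ> D2) (E2 \<circ> E1)"
  unfolding good_def by simp

lemma good_sym: "\<forall>x y. ip x y = cnj (ip y x) \<Longrightarrow> good sc ip D E \<Longrightarrow> good sc ip E D"
  unfolding good_def by metis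

lemma good_norm: "good sc ip D E \<Longrightarrow> ip (D u) (D u) = ip u u"
  unfolding good_def by metis

lemma good_zero: "good sc ip D E \<Longrightarrow> D 0 = (0::'h::ab_group_add)"
  unfolding good_def by (metis add_cancel_right_right add_0)

lemma unitary_good: "unitary_op sc ip U \<Longrightarrow> \<exists>V. good sc ip U V"
  unfolding unitary_op_def bounded_op_def good_def Vector_Spaces.linear_iff
  by (metis comp_apply id_apply)

primrec Wn :: "('d \<Rightarrow> ('d \<Rightarrow> nat) \<Rightarrow> 'h \<Rightarrow> 'h) \<Rightarrow> nat \<Rightarrow> ('d \<Rightarrow> nat) \<Rightarrow> 'h \<Rightarrow> 'h" where
  "Wn A 0 \<alpha> = id"
| "Wn A (Suc n) \<alpha> = (if (\<forall>i. \<alpha> i = 0) then id else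
     A (SOME k. 0 < \<alpha> k) (idx_sub \<alpha> (eps (SOME k. 0 < \<alpha> k))) \<circ> Wn A n (idx_sub \<alpha> (eps (SOME k. 0 < \<alpha> k))))"

definition sm :: "('d::finite \<Rightarrow> nat) \<Rightarrow> nat" where
  "sm \<alpha> = (\<Sum>i\<in>UNIV. \<alpha> i)"

definition W :: "('d::finite \<Rightarrow> ('d \<Rightarrow> nat) \<Rightarrow> 'h \<Rightarrow> 'h) \<Rightarrow> ('d \<Rightarrow> nat) \<Rightarrow> 'h \<Rightarrow> 'h" where
  "W A \<alpha> = Wn A (sm \<alpha>) \<alpha>"

lemma idx_add_sub: "0 < \<alpha> j \<Longrightarrow> idx_add (idx_sub \<alpha> (eps j)) (eps j) = \<alpha>"
  unfolding idx_add_def idx_sub_def eps_def by auto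

lemma idx_sub_other: "j \<noteq> k \<Longrightarrow> idx_sub \<alpha> (eps k) j = \<alpha> j"
  unfolding idx_sub_def eps_def by auto

lemma idx_sub_comm: "idx_sub (idx_sub \<alpha> (eps j)) (eps k) = idx_sub (idx_sub \<alpha> (eps k)) (eps j)"
  unfolding idx_sub_def eps_def by auto

lemma sm_add_eps: "sm (idx_add \<beta> (eps j)) = Suc (sm \<beta>)"
proof -
  have "sm (idx_add \<beta> (eps j)) = sm \<beta> + (\<Sum>i\<in>UNIV. eps j i)"
    unfolding sm_def idx_add_def by (simp add: sum.distrib)
  also have "(\<Sum>i\<in>UNIV. eps j i) = 1"
    unfolding eps_def by simp
  finally show ?thesis by simp
qed

lemma sm_sub: "0 < \<alpha> j \<Longrightarrow> sm \<alpha> = Suc (sm (idx_sub \<alpha> (eps j)))"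
  using sm_add_eps[of "idx_sub \<alpha> (eps j)" j] idx_add_sub[of \<alpha> j] by simp

lemma W_zero: "(\<forall>i. \<alpha> i = 0) \<Longrightarrow> W A \<alpha> = id"
  unfolding W_def sm_def by simp

lemma W_some: "0 < \<alpha> j \<Longrightarrow> k = (SOME k. 0 < \<alpha> k) \<Longrightarrow>
   W A \<alpha> = A k (idx_sub \<alpha> (eps k)) \<circ> W A (idx_sub \<alpha> (eps k))"
proof -
  assume j: "0 < \<alpha> j" and k: "k = (SOME k. 0 < \<alpha> k)"
  have kp: "0 < \<alpha> k" using j k by (metis someI_ex)
  have "\<not> (\<forall>i. \<alpha> i = 0)" using j by auto
  then show ?thesis unfolding W_def using sm_sub[of \<alpha> k, OF kp] k by (simp del: not_all)
qed

lemma W_step: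
  assumes comm: "\<forall>i j \<alpha>. A i (idx_add \<alpha> (eps j)) \<circ> A j \<alpha> = A j (idx_add \<alpha> (eps i)) \<circ> A i \<alpha>"
  shows "sm \<alpha> = n \<Longrightarrow> 0 < \<alpha> j \<Longrightarrow> W A \<alpha> = A j (idx_sub \<alpha> (eps j)) \<circ> W A (idx_sub \<alpha> (eps j))"
proof (induction n arbitrary: \<alpha> j rule: less_induct)
  case (less n)
  define k where "k = (SOME k. 0 < \<alpha> k)"
  have kp: "0 < \<alpha> k" using less.prems k_def by (metis someI_ex)
  have Wa: "W A \<alpha> = A k (idx_sub \<alpha> (eps k)) \<circ> W A (idx_sub \<alpha> (eps k))"
    using W_some[OF less.prems(2) k_def] .
  show ?case
  proof (cases "j = k")
    case True then show ?thesis using Wa by simp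
  next
    case False
    define \<gamma> where "\<gamma> = idx_sub (idx_sub \<alpha> (eps k)) (eps j)"
    have s1: "sm (idx_sub \<alpha> (eps k)) < n" using sm_sub[of \<alpha> k, OF kp] less.prems by simp
    have s2: "sm (idx_sub \<alpha> (eps j)) < n" using sm_sub[of \<alpha> j, OF less.prems(2)] less.prems by simp
    have p1: "0 < idx_sub \<alpha> (eps k) j" using False less.prems(2) idx_sub_other by metis
    have p2: "0 < idx_sub \<alpha> (eps j) k" using False kp idx_sub_other by metis
    have e1: "W A (idx_sub \<alpha> (eps k)) = A j \<gamma> \<circ> W A \<gamma>"
      using less.IH[OF s1 refl p1] unfolding \<gamma>_def .
    have e2: "W A (idx_sub \<alpha> (eps j)) = A k \<gamma> \<circ> W A \<gamma>"
      using less.IH[OF s2 refl p2] unfolding \<gamma>_def idx_sub_comm[of \<alpha> k j] .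
    have g1: "idx_add \<gamma> (eps j) = idx_sub \<alpha> (eps k)"
      unfolding \<gamma>_def using idx_add_sub[of "idx_sub \<alpha> (eps k)" j, OF p1] .
    have g2: "idx_add \<gamma> (eps k) = idx_sub \<alpha> (eps j)"
      unfolding \<gamma>_def idx_sub_comm[of \<alpha> k j] using idx_add_sub[of "idx_sub \<alpha> (eps j)" k, OF p2] .
    have "W A \<alpha> = (A k (idx_add \<gamma> (eps j)) \<circ> A j \<gamma>) \<circ> W A \<gamma>"
      using Wa e1 g1 by (simp add: comp_assoc)
    also have "\<dots> = (A j (idx_add \<gamma> (eps k)) \<circ> A k \<gamma>) \<circ> W A \<gamma>"
      using comm by metis
    also have "\<dots> = A j (idx_sub \<alpha> (eps j)) \<circ> W A (idx_sub \<alpha> (eps j))"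
      using e2 g2 by (simp add: comp_assoc)
    finally show ?thesis .
  qed
qed

lemma W_good:
  assumes u: "\<forall>j \<alpha>. unitary_op sc ip (A j \<alpha>)"
  shows "sm \<alpha> = n \<Longrightarrow> \<exists>E. good sc ip (W A \<alpha>) E"
proof (induction n arbitrary: \<alpha>)
  case 0
  then have "\<forall>i. \<alpha> i = 0" unfolding sm_def by simp
  then show ?case using W_zero good_id by metis
next
  case (Suc n)
  have "\<not> (\<forall>i. \<alpha> i = 0)"
  proof
    assume "\<forall>i. \<alpha> i = 0"
    then have "sm \<alpha> = 0" unfolding sm_def by simp
    then show False using Suc.prems by simp
  qed
  then have "\<exists>j. 0 < \<alpha> j" by auto
  then obtain j where j: "0 < \<alpha> j" by blast
  define k where "k = (SOME k. 0 < \<alpha> k)"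
  have kp: "0 < \<alpha> k" using j k_def by (metis someI_ex)
  have "sm (idx_sub \<alpha> (eps k)) = n" using sm_sub[of \<alpha> k, OF kp] Suc.prems by simp
  then obtain E where E: "good sc ip (W A (idx_sub \<alpha> (eps k))) E" using Suc.IH by blast
  obtain F where F: "good sc ip (A k (idx_sub \<alpha> (eps k))) F" using u unitary_good by metis
  show ?case using W_some[OF j k_def] good_comp[OF F E] by metis
qed


definition Winv where "Winv sc ip A \<alpha> = (SOME E. good sc ip (W A \<alpha>) E)"

lemma Winv_good: "\<forall>j \<alpha>. unitary_op sc ip (A j \<alpha>) \<Longrightarrow> good sc ip (W A \<alpha>) (Winv sc ip A \<alpha>)"
  unfolding Winv_def using W_good[of sc ip A \<alpha> "sm \<alpha>"] by (metis someI_ex)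

lemma main_rel:
  assumes u: "\<forall>j \<alpha>. unitary_op sc ip (A j \<alpha>)" and ut: "\<forall>j \<alpha>. unitary_op sc ip (At j \<alpha>)"
    and c: "\<forall>i j \<alpha>. A i (idx_add \<alpha> (eps j)) \<circ> A j \<alpha> = A j (idx_add \<alpha> (eps i)) \<circ> A i \<alpha>"
    and ct: "\<forall>i j \<alpha>. At i (idx_add \<alpha> (eps j)) \<circ> At j \<alpha> = At j (idx_add \<alpha> (eps i)) \<circ> At i \<alpha>"
    and j: "0 < \<alpha> j"
  shows "W At \<alpha> (Winv sc ip A \<alpha> (A j (idx_sub \<alpha> (eps j)) v)) =
         At j (idx_sub \<alpha> (eps j)) (W At (idx_sub \<alpha> (eps j)) (Winv sc ip A (idx_sub \<alpha> (eps j)) v))"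
proof -
  let ?b = "idx_sub \<alpha> (eps j)"
  have g1: "good sc ip (W A \<alpha>) (Winv sc ip A \<alpha>)" using Winv_good[OF u] .
  have g2: "good sc ip (W A ?b) (Winv sc ip A ?b)" using Winv_good[OF u] .
  have s: "W A \<alpha> = A j ?b \<circ> W A ?b" using j by (rule W_step[OF c refl])
  have st: "W At \<alpha> = At j ?b \<circ> W At ?b" using j by (rule W_step[OF ct refl])
  have "A j ?b v = W A \<alpha> (Winv sc ip A ?b v)" using s g2 unfolding good_def by simp
  then have "Winv sc ip A \<alpha> (A j ?b v) = Winv sc ip A ?b v" using g1 unfolding good_def by simp
  then show ?thesis using st by simp
qed

theorem lemma3p2:
  fixes sc :: "complex \<Rightarrow> 'h::ab_group_add \<Rightarrow> 'h"
    and ip :: "'h \<Rightarrow> 'h \<Rightarrow> complex"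
    and A At :: "'d::finite \<Rightarrow> ('d \<Rightarrow> nat) \<Rightarrow> 'h \<Rightarrow> 'h"
  assumes "complex_hilbert_space sc ip"
    and "commuting_op_multishift sc ip A"
    and "commuting_op_multishift sc ip At"
    and "\<forall>j \<alpha>. unitary_op sc ip (A j \<alpha>)"
    and "\<forall>j \<alpha>. unitary_op sc ip (At j \<alpha>)"
  shows "\<exists>U V. l2_unitary sc ip U V \<and>
           (\<forall>j. \<forall>x\<in>l2 ip. U (multishift A j (V x)) = multishift At j x)"
proof -
  have cnj: "\<forall>x y. ip x y = cnj (ip y x)" using assms(1) unfolding complex_hilbert_space_def by (elim conjE) assumption
  have c: "\<forall>i j \<alpha>. A i (idx_add \<alpha> (eps j)) \<circ> A j \<alpha> = A j (idx_add \<alpha> (eps i)) \<circ> A i \<alpha>"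
    using assms(2) unfolding commuting_op_multishift_def by (elim conjE) assumption
  have ct: "\<forall>i j \<alpha>. At i (idx_add \<alpha> (eps j)) \<circ> At j \<alpha> = At j (idx_add \<alpha> (eps i)) \<circ> At i \<alpha>"
    using assms(3) unfolding commuting_op_multishift_def by (elim conjE) assumption
  define D where "D \<alpha> = W At \<alpha> \<circ> Winv sc ip A \<alpha>" for \<alpha>
  define E where "E \<alpha> = W A \<alpha> \<circ> Winv sc ip At \<alpha>" for \<alpha>
  have gD: "good sc ip (D \<alpha>) (E \<alpha>)" for \<alpha>
    unfolding D_def E_def
    by (rule good_comp[OF Winv_good[OF assms(5)] good_sym[OF cnj Winv_good[OF assms(4)]]])
  have gE: "good sc ip (E \<alpha>) (D \<alpha>)" for \<alpha> using good_sym[OF cnj gD] .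
  define U where "U x = (\<lambda>\<alpha>. D \<alpha> (x \<alpha>))" for x :: "('d \<Rightarrow> nat) \<Rightarrow> 'h"
  define V where "V x = (\<lambda>\<alpha>. E \<alpha> (x \<alpha>))" for x :: "('d \<Rightarrow> nat) \<Rightarrow> 'h"
  have hU: "hnorm ip (U x \<alpha>) = hnorm ip (x \<alpha>)" for x \<alpha>
    unfolding U_def hnorm_def using good_norm[OF gD] by simp
  have hV: "hnorm ip (V x \<alpha>) = hnorm ip (x \<alpha>)" for x \<alpha>
    unfolding V_def hnorm_def using good_norm[OF gE] by simp
  have nU: "l2_norm ip (U x) = l2_norm ip x" for x
    unfolding l2_norm_def l2_inner_def U_def using good_norm[OF gD] by simp
  have "l2_unitary sc ip U V"
    unfolding l2_unitary_def
  proof (intro conjI ballI allI)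
    show "U ` l2 ip \<subseteq> l2 ip" unfolding l2_def using hU by auto
    show "V ` l2 ip \<subseteq> l2 ip" unfolding l2_def using hV by auto
    fix x y :: "('d \<Rightarrow> nat) \<Rightarrow> 'h" and c
    show "U (\<lambda>\<alpha>. x \<alpha> + y \<alpha>) = (\<lambda>\<alpha>. U x \<alpha> + U y \<alpha>)" unfolding U_def using gD unfolding good_def by simp
    show "V (\<lambda>\<alpha>. x \<alpha> + y \<alpha>) = (\<lambda>\<alpha>. V x \<alpha> + V y \<alpha>)" unfolding V_def using gD unfolding good_def by simp
    show "U (l2_scale sc c x) = l2_scale sc c (U x)" unfolding U_def l2_scale_def using gD unfolding good_def by simp
    show "V (l2_scale sc c x) = l2_scale sc c (V x)" unfolding V_def l2_scale_def using gD unfolding good_def by simp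
    show "l2_inner ip (U x) y = l2_inner ip x (V y)" unfolding l2_inner_def U_def V_def using gD unfolding good_def by simp
    show "U (V x) = x" unfolding U_def V_def using gD unfolding good_def by simp
    show "V (U x) = x" unfolding U_def V_def using gD unfolding good_def by simp
  next
    show "\<exists>K. \<forall>x\<in>l2 ip. l2_norm ip (U x) \<le> K * l2_norm ip x" using nU by (intro exI[of _ 1]) simp
  qed
  moreover have "U (multishift A j (V x)) = multishift At j x" for j x
  proof
    fix \<alpha>
    show "U (multishift A j (V x)) \<alpha> = multishift At j x \<alpha>"
    proof (cases "\<alpha> j = 0")
      case True then show ?thesis unfolding U_def multishift_def using good_zero[OF gD] by simp
    next
      case False
      let ?b = "idx_sub \<alpha> (eps j)"
      have "U (multishift A j (V x)) \<alpha> = D \<alpha> (A j ?b (E ?b (x ?b)))"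
        unfolding U_def V_def multishift_def using False by simp
      also have "\<dots> = At j ?b (D ?b (E ?b (x ?b)))"
        unfolding D_def using main_rel[OF assms(4,5) c ct, of \<alpha> j] False by simp
      also have "\<dots> = At j ?b (x ?b)" using gD unfolding good_def by simp
      finally show ?thesis unfolding multishift_def using False by simp
    qed
  qed
  ultimately show ?thesis by blast
qed

end
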